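(* Let $S,T$ be nonempty subsets of $\{1,\dots,n-1\}$ and let $D$ be the digraph of the Boolean Toeplitz matrix $T_n\langle S;T\rangle$. If two vertices $u$ and $v$ are adjacent in the $m$-step competition graph $C^m(D)$ for some positive integer $m$, then $u-v$ is a multiple of $\gcd\{s+t: s\in S,t\in T\}$.
   Context: $T_n\langle S;T\rangle$ is the $n\times n$ $(0,1)$-matrix whose $(i,j)$-entry is $1$ iff $j-i\in S$ or $i-j\in T$; its digraph has vertex set $[n]$ and arc $(i,j)$ iff that entry is $1$. $C^m(D)$ is the graph on $[n]$ in which distinct $u,v$ are adjacent iff there is a vertex $w$ with directed $(u,w)$-walk and directed $(v,w)$-walk both of length $m$. *)

theory Defs
  imports Main
begin

text \<open>Arc relation of the digraph of the Boolean Toeplitz matrix T_n<S;T>: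
  vertex set {1..n}; arc (i,j) iff the (i,j)-entry is 1, i.e. j - i \<in> S or i - j \<in> T.\<close>
definition toeplitz_arc :: "nat \<Rightarrow> nat set \<Rightarrow> nat set \<Rightarrow> nat \<Rightarrow> nat \<Rightarrow> bool" where
  "toeplitz_arc n S T i j \<longleftrightarrow> i \<in> {1..n} \<and> j \<in> {1..n} \<and>
     ((\<exists>s\<in>S. int j - int i = int s) \<or> (\<exists>t\<in>T. int i - int j = int t))"

definition dwalk :: "('a \<Rightarrow> 'a \<Rightarrow> bool) \<Rightarrow> 'a set \<Rightarrow> nat \<Rightarrow> 'a \<Rightarrow> 'a \<Rightarrow> bool" where
  "dwalk A V m u w \<longleftrightarrow> (\<exists>xs. length xs = Suc m \<and> set xs \<subseteq> V \<and> hd xs = u \<and> last xs = w \<and>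
       (\<forall>k<m. A (xs ! k) (xs ! Suc k)))"

definition mstep_comp_adj :: "('a \<Rightarrow> 'a \<Rightarrow> bool) \<Rightarrow> 'a set \<Rightarrow> nat \<Rightarrow> 'a \<Rightarrow> 'a \<Rightarrow> bool" where
  "mstep_comp_adj A V m u v \<longleftrightarrow> u \<in> V \<and> v \<in> V \<and> u \<noteq> v \<and>
     (\<exists>w\<in>V. dwalk A V m u w \<and> dwalk A V m v w)"

end

theory Submission
  imports Defs
begin

lemma walk_mod:
  fixes g :: int and c :: int
  assumes step: "\<And>i j. A i j \<Longrightarrow> g dvd (int j - int i - c)"
    and arcs: "\<forall>k<m. A (xs ! k) (xs ! Suc k)"
  shows "k \<le> m \<Longrightarrow> g dvd (int (xs ! k) - int (xs ! 0) - int k * c)"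
proof (induction k)
  case 0 then show ?case by simp
next
  case (Suc k)
  then have "A (xs ! k) (xs ! Suc k)" using arcs by simp
  then have h: "g dvd (int (xs ! Suc k) - int (xs ! k) - c)" by (rule step)
  have "g dvd (int (xs ! k) - int (xs ! 0) - int k * c)" using Suc by simp
  then have "g dvd ((int (xs ! Suc k) - int (xs ! k) - c) + (int (xs ! k) - int (xs ! 0) - int k * c))"
    using h by (rule dvd_add[rotated])
  then show ?case by (simp add: algebra_simps)
qed

lemma dwalk_mod:
  fixes g :: int and c :: int
  assumes step: "\<And>i j. A i j \<Longrightarrow> g dvd (int j - int i - c)"
    and "dwalk A V m u w"
  shows "g dvd (int w - int u - int m * c)"
proof -
  obtain xs where xs: "length xs = Suc m" "hd xs = u" "last xs = w"
    "\<forall>k<m. A (xs ! k) (xs ! Suc k)" using assms(2) unfolding dwalk_def by blast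
  have "g dvd (int (xs ! m) - int (xs ! 0) - int m * c)"
    using walk_mod[OF step xs(4)] by simp
  moreover have "xs ! 0 = u" using xs by (metis hd_conv_nth list.size(3) nat.distinct(1))
  moreover have "xs ! m = w" using xs by (metis diff_Suc_1 last_conv_nth list.size(3) nat.distinct(1))
  ultimately show ?thesis by simp
qed

theorem theorem2p3:
  fixes n m u v :: nat and S T :: "nat set"
  assumes "S \<noteq> {}" and "T \<noteq> {}"
    and "S \<subseteq> {1..n-1}" and "T \<subseteq> {1..n-1}"
    and "m \<ge> 1"
    and "mstep_comp_adj (toeplitz_arc n S T) {1..n} m u v"
  shows "int (Gcd {s + t | s t. s \<in> S \<and> t \<in> T}) dvd (int u - int v)"
proof -
  define G where "G = Gcd {s + t | s t. s \<in> S \<and> t \<in> T}"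
  obtain s0 where s0: "s0 \<in> S" using assms(1) by blast
  obtain t0 where t0: "t0 \<in> T" using assms(2) by blast
  have gd: "int G dvd int s + int t" if "s \<in> S" "t \<in> T" for s t
  proof -
    have "G dvd s + t" unfolding G_def by (rule Gcd_dvd) (use that in blast)
    then show ?thesis by (metis of_nat_add of_nat_dvd_iff)
  qed
  have step: "int G dvd (int j - int i - int s0)" if "toeplitz_arc n S T i j" for i j
  proof -
    from that consider (a) s where "s \<in> S" "int j - int i = int s"
      | (b) t where "t \<in> T" "int i - int j = int t"
      unfolding toeplitz_arc_def by blast
    then show ?thesis
    proof cases
      case a
      have "int G dvd (int s + int t0) - (int s0 + int t0)"
        using gd[OF a(1) t0] gd[OF s0 t0] by (rule dvd_diff)
      then show ?thesis using a by (simp add: algebra_simps)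
    next
      case b
      have "int G dvd - (int s0 + int t)" using gd[OF s0 b(1)] by (metis dvd_minus_iff)
      moreover have "int j - int i - int s0 = - (int s0 + int t)" using b by simp
      ultimately show ?thesis by (metis add.commute)
    qed
  qed
  from assms(6) obtain w where "dwalk (toeplitz_arc n S T) {1..n} m u w"
    "dwalk (toeplitz_arc n S T) {1..n} m v w"
    unfolding mstep_comp_adj_def by blast
  then have "int G dvd (int w - int u - int m * int s0)" "int G dvd (int w - int v - int m * int s0)"
    using dwalk_mod[OF step] by blast+
  then have "int G dvd (int w - int v - int m * int s0) - (int w - int u - int m * int s0)"
    by (metis dvd_diff)
  moreover have "(int w - int v - int m * int s0) - (int w - int u - int m * int s0) = int u - int v" by simp
  ultimately show ?thesis unfolding G_def[symmetric] by metis
qed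

end
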